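(* Let $f$ be a nonnegative locally integrable function on $\mathbb R$, $\lambda>0$, and let $\{I_i\}_{i=1}^m$ be a well-separated family of intervals such that for every $i$, $$\lambda\le\frac{\int_{I_i}f(y)\,dy}{|I_i|}\le2\lambda.$$ Then for every $1\le i\le m$ there exists $j_i\in[-50,50]\setminus\{0\}$ such that $$\Big|H\big(f\chi_{\bigcup_{i=1}^mI_i}\big)(x)\Big|\ge\frac\lambda8\qquad\text{for every }x\in\bigcup_{i=1}^mI_{i,j_i}.$$
   Context: $Hf(x)=\frac1\pi\lim_{\varepsilon\to0^+}\int_{|x-y|>\varepsilon}\frac{f(y)}{x-y}dy$. For an interval $I$ and an integer $j\in[-50,50]$, $I_j$ denotes the interval with $|I_j|=|I|$, $I_0=I$, and for $j\ne0$, $\mathrm{dist}(I_j,I)=(|j|-1)|I|$ with $I_j$ to the left of $I$ if $j<0$ and to the right if $j>0$; $I_{i,j}$ denotes $(I_i)_j$. A finite family of intervals $\{I_i\}$ is well-separated if the intervals $101I_i$ (same center, $101$ times the length) are pairwise disjoint. *)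

theory Defs
  imports "HOL-Analysis.Analysis"
begin

definition hilbert :: "(real \<Rightarrow> real) \<Rightarrow> real \<Rightarrow> real" where
  "hilbert f x = Lim (at_right 0)
     (\<lambda>\<epsilon>. (1 / pi) * (LINT y : {y. \<epsilon> < \<bar>x - y\<bar>} | lborel. f y / (x - y)))"

definition locally_integrable :: "(real \<Rightarrow> real) \<Rightarrow> bool" where
  "locally_integrable f \<longleftrightarrow> (\<forall>K. compact K \<longrightarrow> set_integrable lborel K f)"

text \<open>The interval I = [a,b] is shifted to I_j = [a + j|I|, b + j|I|]; this has
  |I_j| = |I|, and for j \<noteq> 0 dist(I_j, I) = (|j|-1)|I|, to the left iff j < 0.\<close>
definition shift_lo :: "real \<Rightarrow> real \<Rightarrow> int \<Rightarrow> real" where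
  "shift_lo a b j = a + of_int j * (b - a)"

definition shift_hi :: "real \<Rightarrow> real \<Rightarrow> int \<Rightarrow> real" where
  "shift_hi a b j = b + of_int j * (b - a)"

definition dil101 :: "real \<Rightarrow> real \<Rightarrow> real set" where
  "dil101 a b = {(a + b) / 2 - 101 * (b - a) / 2 .. (a + b) / 2 + 101 * (b - a) / 2}"

definition well_separated :: "nat \<Rightarrow> (nat \<Rightarrow> real) \<Rightarrow> (nat \<Rightarrow> real) \<Rightarrow> bool" where
  "well_separated m a b \<longleftrightarrow>
     (\<forall>i\<in>{1..m}. \<forall>k\<in>{1..m}. i \<noteq> k \<longrightarrow> dil101 (a i) (b i) \<inter> dil101 (a k) (b k) = {})"

end

theory Submission
  imports Defs
begin

lemma tele:
  fixes s e :: "nat \<Rightarrow> real" and g :: "real \<Rightarrow> real"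
  assumes "finite S"
    and "\<forall>k\<in>S. L \<le> s k \<and> s k \<le> e k"
    and "\<forall>k\<in>S. \<forall>l\<in>S. k \<noteq> l \<longrightarrow> e k < s l \<or> e l < s k"
    and "\<forall>u v. L0 \<le> u \<longrightarrow> u \<le> v \<longrightarrow> g u \<le> g v"
    and "\<forall>u. L0 \<le> u \<longrightarrow> g u \<le> M"
    and "L0 \<le> L"
  shows "(\<Sum>k\<in>S. g (e k) - g (s k)) \<le> M - g L"
  using assms
proof (induction "card S" arbitrary: S L rule: less_induct)
  case less
  show ?case
  proof (cases "S = {}")
    case True
    then show ?thesis using less.prems by auto
  next
    case False
    have fin: "finite (s ` S)" "s ` S \<noteq> {}" using False less.prems(1) by auto
    obtain k0 where k0a: "k0 \<in> S" "s k0 = Min (s ` S)"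
      using Min_in[OF fin] by auto
    have k0: "k0 \<in> S" "\<forall>k\<in>S. s k0 \<le> s k"
      using k0a Min_le[OF fin(1)] by auto
    have rest: "\<forall>k\<in>S - {k0}. e k0 \<le> s k \<and> s k \<le> e k"
    proof
      fix k assume k: "k \<in> S - {k0}"
      have "e k0 < s k \<or> e k < s k0" using less.prems(3) k k0(1) by auto
      moreover have "s k0 \<le> s k" "s k \<le> e k" using k0 k less.prems(2) by auto
      ultimately show "e k0 \<le> s k \<and> s k \<le> e k" by linarith
    qed
    have c: "card (S - {k0}) < card S" using k0(1) less.prems(1) by (meson card_Diff1_less)
    have IH: "(\<Sum>k\<in>S - {k0}. g (e k) - g (s k)) \<le> M - g (e k0)"
      apply (rule less.hyps[OF c])
      using less.prems rest k0 by auto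
    have "(\<Sum>k\<in>S. g (e k) - g (s k)) = (g (e k0) - g (s k0)) + (\<Sum>k\<in>S - {k0}. g (e k) - g (s k))"
      using k0(1) less.prems(1) by (simp add: sum.remove)
    also have "\<dots> \<le> M - g (s k0)" using IH by linarith
    also have "\<dots> \<le> M - g L" using less.prems(2,4,6) k0(1) by auto
    finally show ?thesis .
  qed
qed

lemma sumbound:
  fixes s e :: "nat \<Rightarrow> real"
  assumes "finite S" "0 < l"
    and "\<forall>k\<in>S. p + 49 * l \<le> s k \<and> s k \<le> e k"
    and "\<forall>k\<in>S. \<forall>j\<in>S. k \<noteq> j \<longrightarrow> e k < s j \<or> e j < s k"
  shows "(\<Sum>k\<in>S. (e k - s k) / (e k - p)^2) \<le> 1 / (49 * l)"
proof -
  define g where "g t = - 1 / (t - p)" for t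
  have "(\<Sum>k\<in>S. (e k - s k) / (e k - p)^2) \<le> (\<Sum>k\<in>S. g (e k) - g (s k))"
  proof (rule sum_mono)
    fix k assume k: "k \<in> S"
    have s: "0 < s k - p" "s k - p \<le> e k - p" using assms(2,3) k by fastforce+
    have "g (e k) - g (s k) = (e k - s k) / ((s k - p) * (e k - p))"
      using s by (simp add: g_def field_simps)
    also have "\<dots> \<ge> (e k - s k) / (e k - p)^2"
      apply (rule divide_left_mono) using s by (auto simp: power2_eq_square intro!: mult_right_mono mult_pos_pos)
    finally show "(e k - s k) / (e k - p)^2 \<le> g (e k) - g (s k)" .
  qed
  also have "\<dots> \<le> 0 - g (p + 49 * l)"
    apply (rule tele[where L0 = "p + 49 * l"])
  proof -
    show "finite S" "\<forall>k\<in>S. p + 49 * l \<le> s k \<and> s k \<le> e k"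
      "\<forall>k\<in>S. \<forall>l\<in>S. k \<noteq> l \<longrightarrow> e k < s l \<or> e l < s k" "p + 49 * l \<le> p + 49 * l"
      using assms by auto
    show "\<forall>u v. p + 49 * l \<le> u \<longrightarrow> u \<le> v \<longrightarrow> g u \<le> g v"
    proof (intro allI impI)
      fix u v assume uv: "p + 49 * l \<le> u" "u \<le> v"
      then have "0 < u - p" using assms(2) by linarith
      then have "1 / (v - p) \<le> 1 / (u - p)" using uv by (intro divide_left_mono) auto
      then show "g u \<le> g v" by (simp add: g_def)
    qed
    show "\<forall>u. p + 49 * l \<le> u \<longrightarrow> g u \<le> 0"
    proof (intro allI impI)
      fix u assume "p + 49 * l \<le> u"
      then have "0 < u - p" using assms(2) by linarith
      then show "g u \<le> 0" by (simp add: g_def)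
    qed
  qed
  also have "\<dots> = 1 / (49 * l)" by (simp add: g_def)
  finally show ?thesis .
qed


lemma integ_div:
  fixes f :: "real \<Rightarrow> real"
  assumes fi: "set_integrable lborel {u..v} f" and x: "x \<notin> {u..v}"
  shows "set_integrable lborel {u..v} (\<lambda>y. f y / (x - y))"
proof -
  obtain d where d: "0 < d" "\<forall>y\<in>{u..v}. d \<le> \<bar>x - y\<bar>"
  proof (cases "x < u")
    case True
    show ?thesis by (rule that[of "u - x"]) (use True in auto)
  next
    case False
    then have "v < x" using x by auto
    show ?thesis by (rule that[of "x - v"]) (use \<open>v < x\<close> in auto)
  qed
  have I: "integrable lborel (\<lambda>y. indicator {u..v} y * f y)"
    using fi unfolding set_integrable_def by simp
  have m: "(\<lambda>y. indicator {u..v} y * f y) \<in> borel_measurable lborel"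
    using I by (rule borel_measurable_integrable)
  have m2: "(\<lambda>y. (indicator {u..v} y * f y) * inverse (x - y)) \<in> borel_measurable lborel"
    using m by measurable
  have eq: "(\<lambda>y. indicator {u..v} y *\<^sub>R (f y / (x - y))) = (\<lambda>y. (indicator {u..v} y * f y) * inverse (x - y))"
    by (auto simp: indicator_def divide_inverse)
  have AE: "AE y in lborel. norm (indicator {u..v} y * f y * inverse (x - y)) \<le> norm (indicator {u..v} y * f y / d)"
  proof (rule AE_I2)
    fix y
    show "norm (indicator {u..v} y * f y * inverse (x - y)) \<le> norm (indicator {u..v} y * f y / d)"
    proof (cases "y \<in> {u..v}")
      case True
      then have dy: "d \<le> \<bar>x - y\<bar>" using d by auto
      have "\<bar>inverse (x - y)\<bar> \<le> inverse d"
        using dy d by (simp add: abs_inverse le_imp_inverse_le)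
      then have "\<bar>f y\<bar> * \<bar>inverse (x - y)\<bar> \<le> \<bar>f y\<bar> * inverse d"
        by (rule mult_left_mono) simp
      then show ?thesis using True d by (simp add: abs_mult divide_inverse)
    next
      case False
      then show ?thesis by simp
    qed
  qed
  have I2: "integrable lborel (\<lambda>y. indicator {u..v} y * f y / d)" using I by auto
  show ?thesis
    unfolding set_integrable_def eq
    by (rule Bochner_Integration.integrable_bound[OF I2 m2 AE])
qed

lemma lip:
  fixes f :: "real \<Rightarrow> real"
  assumes fn: "\<And>y. 0 \<le> f y" and fi: "set_integrable lborel {u..v} f"
    and D: "0 < D" "\<forall>y\<in>{u..v}. D \<le> \<bar>x - y\<bar> \<and> D \<le> \<bar>x' - y\<bar>"
  shows "\<bar>(LINT y:{u..v}|lborel. f y / (x - y)) - (LINT y:{u..v}|lborel. f y / (x' - y))\<bar>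
          \<le> \<bar>x - x'\<bar> / D^2 * (LINT y:{u..v}|lborel. f y)"
proof -
  have xn: "x \<notin> {u..v}" "x' \<notin> {u..v}" using D by force+
  have i1: "set_integrable lborel {u..v} (\<lambda>y. f y / (x - y))" by (rule integ_div[OF fi xn(1)])
  have i2: "set_integrable lborel {u..v} (\<lambda>y. f y / (x' - y))" by (rule integ_div[OF fi xn(2)])
  define c where "c = \<bar>x - x'\<bar> / D^2"
  have pw: "\<bar>f y / (x - y) - f y / (x' - y)\<bar> \<le> c * f y" if y: "y \<in> {u..v}" for y
  proof -
    have d1: "D \<le> \<bar>x - y\<bar>" "D \<le> \<bar>x' - y\<bar>" using D y by auto
    have nz: "x - y \<noteq> 0" "x' - y \<noteq> 0" using d1 D by auto
    have "\<bar>1 / (x - y) - 1 / (x' - y)\<bar> = \<bar>x - x'\<bar> / (\<bar>x - y\<bar> * \<bar>x' - y\<bar>)"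
      using nz by (simp add: field_simps abs_mult[symmetric]) (simp add: abs_minus_commute)
    also have "\<dots> \<le> \<bar>x - x'\<bar> / (D * D)"
      apply (rule divide_left_mono) using d1 D by (auto intro!: mult_mono mult_pos_pos)
    finally have "\<bar>1 / (x - y) - 1 / (x' - y)\<bar> \<le> c" by (simp add: c_def power2_eq_square)
    then have "f y * \<bar>1 / (x - y) - 1 / (x' - y)\<bar> \<le> f y * c" by (rule mult_left_mono) (rule fn)
    moreover have "\<bar>f y / (x - y) - f y / (x' - y)\<bar> = f y * \<bar>1 / (x - y) - 1 / (x' - y)\<bar>"
    proof -
      have "f y / (x - y) - f y / (x' - y) = f y * (1 / (x - y) - 1 / (x' - y))"
        by (simp add: right_diff_distrib)
      then show ?thesis using fn[of y] by (simp add: abs_mult)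
    qed
    ultimately show ?thesis by (simp add: mult.commute)
  qed
  have ic: "set_integrable lborel {u..v} (\<lambda>y. c * f y)" using fi by auto
  have "(LINT y:{u..v}|lborel. f y / (x - y)) - (LINT y:{u..v}|lborel. f y / (x' - y))
      = (LINT y:{u..v}|lborel. f y / (x - y) - f y / (x' - y))"
    using i1 i2 by simp
  moreover have "(LINT y:{u..v}|lborel. f y / (x - y) - f y / (x' - y)) \<le> (LINT y:{u..v}|lborel. c * f y)"
    by (rule set_integral_mono[OF _ ic]) (use i1 i2 pw in \<open>auto dest: abs_le_D1\<close>)
  moreover have "(LINT y:{u..v}|lborel. - (c * f y)) \<le> (LINT y:{u..v}|lborel. f y / (x - y) - f y / (x' - y))"
  proof (rule set_integral_mono)
    show "set_integrable lborel {u..v} (\<lambda>y. - (c * f y))" using ic unfolding set_integrable_def by simp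
    show "set_integrable lborel {u..v} (\<lambda>y. f y / (x - y) - f y / (x' - y))" by (rule set_integral_diff(1)[OF i1 i2])
    fix y assume "y \<in> {u..v}"
    from pw[OF this] show "- (c * f y) \<le> f y / (x - y) - f y / (x' - y)" by (simp add: abs_le_iff)
  qed
  moreover have "(LINT y:{u..v}|lborel. - (c * f y)) = - (LINT y:{u..v}|lborel. c * f y)"
    unfolding set_lebesgue_integral_def by (simp only: scaleR_minus_right integral_minus)
  moreover have "(LINT y:{u..v}|lborel. c * f y) = c * (LINT y:{u..v}|lborel. f y)"
    by (rule set_integral_mult_right)
  ultimately have "\<bar>(LINT y:{u..v}|lborel. f y / (x - y)) - (LINT y:{u..v}|lborel. f y / (x' - y))\<bar>
          \<le> c * (LINT y:{u..v}|lborel. f y)" by linarith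
  then show ?thesis by (simp add: c_def)
qed

lemma near_pos:
  fixes f :: "real \<Rightarrow> real"
  assumes fn: "\<And>y. 0 \<le> f y" and fi: "set_integrable lborel {a..b} f"
    and ab: "a < b" and x: "b < x" "x < 2 * b - a"
  shows "(LINT y:{a..b}|lborel. f y) / (2 * (b - a)) \<le> (LINT y:{a..b}|lborel. f y / (x - y))"
proof -
  have "(LINT y:{a..b}|lborel. f y / (2 * (b - a))) \<le> (LINT y:{a..b}|lborel. f y / (x - y))"
  proof (rule set_integral_mono)
    show "set_integrable lborel {a..b} (\<lambda>y. f y / (2 * (b - a)))" using fi by auto
    show "set_integrable lborel {a..b} (\<lambda>y. f y / (x - y))" using integ_div[OF fi] x by auto
    fix y assume y: "y \<in> {a..b}"
    have "0 < x - y" "x - y \<le> 2 * (b - a)" using y x by auto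
    then show "f y / (2 * (b - a)) \<le> f y / (x - y)" using fn[of y] by (intro divide_left_mono) auto
  qed
  then show ?thesis by simp
qed

lemma near_neg:
  fixes f :: "real \<Rightarrow> real"
  assumes fn: "\<And>y. 0 \<le> f y" and fi: "set_integrable lborel {a..b} f"
    and ab: "a < b" and x: "2 * a - b < x" "x < a"
  shows "(LINT y:{a..b}|lborel. f y / (x - y)) \<le> - ((LINT y:{a..b}|lborel. f y) / (2 * (b - a)))"
proof -
  have "(LINT y:{a..b}|lborel. f y / (x - y)) \<le> (LINT y:{a..b}|lborel. - (f y / (2 * (b - a))))"
  proof (rule set_integral_mono)
    show "set_integrable lborel {a..b} (\<lambda>y. - (f y / (2 * (b - a))))" using fi unfolding set_integrable_def by simp
    show "set_integrable lborel {a..b} (\<lambda>y. f y / (x - y))" using integ_div[OF fi] x by auto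
    fix y assume y: "y \<in> {a..b}"
    have "0 < y - x" "y - x \<le> 2 * (b - a)" using y x by auto
    then have "f y / (2 * (b - a)) \<le> f y / (y - x)" using fn[of y] by (intro divide_left_mono) auto
    moreover have "f y / (x - y) = - (f y / (y - x))"
      by (metis minus_diff_eq minus_divide_right)
    ultimately show "f y / (x - y) \<le> - (f y / (2 * (b - a)))" by linarith
  qed
  also have "(LINT y:{a..b}|lborel. - (f y / (2 * (b - a)))) = - ((LINT y:{a..b}|lborel. f y) / (2 * (b - a)))"
    by (simp add: set_lebesgue_integral_def)
  finally show ?thesis .
qed

lemma hilbert_eval:
  fixes f :: "real \<Rightarrow> real" and E :: "real set"
  assumes "closed E" "x \<notin> E"
  shows "hilbert (\<lambda>y. indicator E y * f y) x = (1/pi) * (LINT y|lborel. indicator E y * f y / (x - y))"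
proof -
  have "open (- E)" using assms(1) by auto
  then obtain r where r: "0 < r" "ball x r \<subseteq> - E" using assms(2) open_contains_ball by blast
  have ev: "eventually (\<lambda>\<epsilon>. (1 / pi) * (LINT y : {y. \<epsilon> < \<bar>x - y\<bar>} | lborel. indicator E y * f y / (x - y))
            = (1/pi) * (LINT y|lborel. indicator E y * f y / (x - y))) (at_right 0)"
    unfolding eventually_at_right_field
  proof (intro exI[of _ r] conjI allI impI)
    show "0 < r" by (rule r)
    fix \<epsilon> :: real assume e: "0 < \<epsilon>" "\<epsilon> < r"
    have "(LINT y : {y. \<epsilon> < \<bar>x - y\<bar>} | lborel. indicator E y * f y / (x - y))
          = (LINT y|lborel. indicator E y * f y / (x - y))"
      unfolding set_lebesgue_integral_def
    proof (rule Bochner_Integration.integral_cong[OF refl])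
      fix y
      show "indicator {y. \<epsilon> < \<bar>x - y\<bar>} y *\<^sub>R (indicator E y * f y / (x - y)) = indicator E y * f y / (x - y)"
      proof (cases "\<epsilon> < \<bar>x - y\<bar>")
        case True then show ?thesis by simp
      next
        case False
        then have "y \<in> ball x r" using e by (auto simp: dist_real_def)
        then have "y \<notin> E" using r by auto
        then show ?thesis by simp
      qed
    qed
    then show "(1 / pi) * (LINT y : {y. \<epsilon> < \<bar>x - y\<bar>} | lborel. indicator E y * f y / (x - y))
            = (1/pi) * (LINT y|lborel. indicator E y * f y / (x - y))" by simp
  qed
  have "((\<lambda>\<epsilon>. (1 / pi) * (LINT y : {y. \<epsilon> < \<bar>x - y\<bar>} | lborel. indicator E y * f y / (x - y)))
        \<longlongrightarrow> (1/pi) * (LINT y|lborel. indicator E y * f y / (x - y))) (at_right 0)"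
    by (rule tendsto_eventually[OF ev])
  then show ?thesis unfolding hilbert_def
    by (intro tendsto_Lim) auto
qed

lemma decomp:
  fixes f :: "real \<Rightarrow> real" and a b :: "nat \<Rightarrow> real"
  assumes "finite K" "disjoint_family_on (\<lambda>k. {a k..b k}) K"
    and "\<forall>k\<in>K. set_integrable lborel {a k..b k} f" and "\<forall>k\<in>K. x \<notin> {a k..b k}"
  shows "(LINT y|lborel. indicator (\<Union>k\<in>K. {a k..b k}) y * f y / (x - y))
       = (\<Sum>k\<in>K. LINT y:{a k..b k}|lborel. f y / (x - y))"
proof -
  have pw: "indicator (\<Union>k\<in>K. {a k..b k}) y * f y / (x - y) = (\<Sum>k\<in>K. indicator {a k..b k} y *\<^sub>R (f y / (x - y)))" for y
  proof -
    have "indicator (\<Union>k\<in>K. {a k..b k}) y = (\<Sum>k\<in>K. indicator {a k..b k} y :: real)"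
      by (rule indicator_UN_disjoint[OF assms(1,2)])
    then show ?thesis by (simp add: sum_distrib_right sum_divide_distrib)
  qed
  have "(LINT y|lborel. indicator (\<Union>k\<in>K. {a k..b k}) y * f y / (x - y))
      = (LINT y|lborel. (\<Sum>k\<in>K. indicator {a k..b k} y *\<^sub>R (f y / (x - y))))"
    by (simp only: pw)
  also have "\<dots> = (\<Sum>k\<in>K. LINT y|lborel. indicator {a k..b k} y *\<^sub>R (f y / (x - y)))"
    by (rule Bochner_Integration.integral_sum) (use assms(3,4) integ_div in \<open>auto simp: set_integrable_def\<close>)
  finally show ?thesis unfolding set_lebesgue_integral_def .
qed


theorem lemma3p8:
  fixes f :: "real \<Rightarrow> real" and lam :: real and m :: nat and a b :: "nat \<Rightarrow> real"
  assumes f_nonneg: "\<And>y. 0 \<le> f y"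
    and f_loc: "locally_integrable f"
    and lam_pos: "0 < lam"
    and intervals: "\<And>i. i \<in> {1..m} \<Longrightarrow> a i < b i"
    and sep: "well_separated m a b"
    and avg: "\<And>i. i \<in> {1..m} \<Longrightarrow>
       lam \<le> (LINT y : {a i..b i} | lborel. f y) / (b i - a i) \<and>
       (LINT y : {a i..b i} | lborel. f y) / (b i - a i) \<le> 2 * lam"
  shows "\<exists>J :: nat \<Rightarrow> int. (\<forall>i\<in>{1..m}. J i \<in> {-50..50} - {0}) \<and>
     (\<forall>x \<in> (\<Union>i\<in>{1..m}. {shift_lo (a i) (b i) (J i) <..< shift_hi (a i) (b i) (J i)}).
        \<bar>hilbert (\<lambda>y. indicator (\<Union>i\<in>{1..m}. {a i..b i}) y * f y) x\<bar> \<ge> lam / 8)"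
proof -
  define N where "N k x = (LINT y:{a k..b k}|lborel. f y / (x - y))" for k x
  define F where "F i x = (\<Sum>k\<in>{1..m}-{i}. N k x)" for i x
  define J where "J i = (if 0 \<le> F i (a i) then 1 else (-1::int))" for i
  define E where "E = (\<Union>i\<in>{1..m}. {a i..b i})"
  have fint: "\<And>k. set_integrable lborel {a k..b k} f"
    using f_loc unfolding locally_integrable_def by auto
  have dil: "\<And>k. dil101 (a k) (b k) = {a k - 50*(b k - a k) .. b k + 50*(b k - a k)}"
    unfolding dil101_def by (rule arg_cong2[where f=atLeastAtMost]) (simp_all add: field_simps)
  have sepk: "b i + 50*(b i - a i) < a k - 50*(b k - a k) \<or> b k + 50*(b k - a k) < a i - 50*(b i - a i)"
    if ik: "i \<in> {1..m}" "k \<in> {1..m}" "i \<noteq> k" for i k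
  proof (rule ccontr)
    assume neg: "\<not> ?thesis"
    define z where "z = max (a i - 50*(b i - a i)) (a k - 50*(b k - a k))"
    have "a i < b i" "a k < b k" using intervals ik by auto
    then have "z \<in> dil101 (a i) (b i) \<inter> dil101 (a k) (b k)"
      unfolding dil z_def using neg by auto
    moreover have "dil101 (a i) (b i) \<inter> dil101 (a k) (b k) = {}"
      using sep ik unfolding well_separated_def by auto
    ultimately show False by auto
  qed
  have disj: "disjoint_family_on (\<lambda>k. {a k..b k}) {1..m}"
    unfolding disjoint_family_on_def
  proof (intro ballI impI)
    fix i k assume ik: "i \<in> {1..m}" "k \<in> {1..m}" "i \<noteq> k"
    have "a i < b i" "a k < b k" using intervals ik by auto
    then show "{a i..b i} \<inter> {a k..b k} = {}" using sepk[OF ik] by auto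
  qed
  have closedE: "closed E" unfolding E_def by (intro closed_UN) auto
  have key: "lam / 8 \<le> \<bar>hilbert (\<lambda>y. indicator E y * f y) x\<bar>"
    if i: "i \<in> {1..m}" and x: "x \<in> {shift_lo (a i) (b i) (J i) <..< shift_hi (a i) (b i) (J i)}" for i x
  proof -
    define l where "l = b i - a i"
    have l: "0 < l" using intervals[OF i] by (simp add: l_def)
    have xT: "a i - l < x" "x < b i + l" "x \<notin> {a i..b i}"
      using x l by (auto simp: J_def shift_lo_def shift_hi_def l_def split: if_splits)
    have xk: "x \<notin> {a k..b k}" if k: "k \<in> {1..m}" for k
    proof (cases "k = i")
      case True then show ?thesis using xT by simp
    next
      case False
      have "a k < b k" using intervals k by auto
      then show ?thesis using sepk[OF i k False[symmetric]] xT l by (auto simp: l_def)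
    qed
    have xE: "x \<notin> E" unfolding E_def using xk by auto
    have S: "hilbert (\<lambda>y. indicator E y * f y) x = (1/pi) * (N i x + F i x)"
    proof -
      have "hilbert (\<lambda>y. indicator E y * f y) x = (1/pi) * (LINT y|lborel. indicator E y * f y / (x - y))"
        by (rule hilbert_eval[OF closedE xE])
      also have "(LINT y|lborel. indicator E y * f y / (x - y)) = (\<Sum>k\<in>{1..m}. N k x)"
        unfolding E_def N_def by (rule decomp) (use disj fint xk in auto)
      also have "\<dots> = N i x + F i x" unfolding F_def using i by (simp add: sum.remove)
      finally show ?thesis .
    qed
    define K where "K = {1..m} - {i}"
    define D where "D k = (if a i < a k then a k - (b i + l) else (a i - l) - b k)" for k
    have Dk: "0 < D k \<and> (\<forall>y\<in>{a k..b k}. D k \<le> \<bar>x - y\<bar> \<and> D k \<le> \<bar>a i - y\<bar>)" if k: "k \<in> K" for k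
    proof -
      have k1: "k \<in> {1..m}" "i \<noteq> k" using k by (auto simp: K_def)
      have "a k < b k" using intervals k1 by auto
      then show ?thesis using sepk[OF i k1(1) k1(2)] xT l
        by (auto simp: D_def l_def)
    qed
    have pk: "\<bar>N k x - N k (a i)\<bar> \<le> 4 * l * lam * ((b k - a k) / (D k)^2)" if k: "k \<in> K" for k
    proof -
      have k1: "k \<in> {1..m}" using k by (auto simp: K_def)
      have abk: "a k < b k" using intervals k1 by auto
      have Ik: "(LINT y:{a k..b k}|lborel. f y) \<le> 2 * lam * (b k - a k)"
        using avg[OF k1] abk by (simp add: divide_le_eq)
      have I0: "0 \<le> (LINT y:{a k..b k}|lborel. f y)"
        using avg[OF k1] abk lam_pos by (smt (verit) divide_nonpos_pos)
      have D0: "0 < (D k)^2" using Dk[OF k] by simp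
      have xa: "\<bar>x - a i\<bar> \<le> 2 * l" using xT by (auto simp: l_def)
      have "\<bar>N k x - N k (a i)\<bar> \<le> \<bar>x - a i\<bar> / (D k)^2 * (LINT y:{a k..b k}|lborel. f y)"
        unfolding N_def by (rule lip[OF f_nonneg fint]) (use Dk[OF k] in auto)
      also have "\<dots> \<le> (2 * l) / (D k)^2 * (2 * lam * (b k - a k))"
        apply (rule mult_mono)
        using xT l D0 Ik I0 xa by (auto intro!: divide_right_mono)
      also have "\<dots> = 4 * l * lam * ((b k - a k) / (D k)^2)" by (simp add: field_simps)
      finally show ?thesis .
    qed
    define R where "R = {k\<in>K. a i < a k}"
    define L where "L = K - R"
    have finK: "finite K" by (simp add: K_def)
    have KRL: "K = R \<union> L" "R \<inter> L = {}" "finite R" "finite L" using finK by (auto simp: R_def L_def)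
    have sumR: "(\<Sum>k\<in>R. (b k - a k) / (D k)^2) \<le> 1 / (50 * 49 * l)"
    proof -
      have "(\<Sum>k\<in>R. (a k - (a k - 50 * (b k - a k))) / (a k - (b i + l))^2) \<le> 1 / (49 * l)"
      proof (rule sumbound[OF KRL(3) l])
        show "\<forall>k\<in>R. b i + l + 49 * l \<le> a k - 50 * (b k - a k) \<and> a k - 50 * (b k - a k) \<le> a k"
        proof
          fix k assume k: "k \<in> R"
          then have k1: "k \<in> {1..m}" "i \<noteq> k" "a i < a k" by (auto simp: R_def K_def)
          have "a k < b k" using intervals k1 by auto
          then show "b i + l + 49 * l \<le> a k - 50 * (b k - a k) \<and> a k - 50 * (b k - a k) \<le> a k"
            using sepk[OF i k1(1,2)] k1 intervals[OF i] by (auto simp: l_def)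
        qed
        show "\<forall>k\<in>R. \<forall>j\<in>R. k \<noteq> j \<longrightarrow> a k < a j - 50 * (b j - a j) \<or> a j < a k - 50 * (b k - a k)"
        proof (intro ballI impI)
          fix k j assume kj: "k \<in> R" "j \<in> R" "k \<noteq> j"
          then have "k \<in> {1..m}" "j \<in> {1..m}" by (auto simp: R_def K_def)
          moreover have "a k < b k" "a j < b j" using intervals calculation by auto
          ultimately show "a k < a j - 50 * (b j - a j) \<or> a j < a k - 50 * (b k - a k)"
            using sepk[of k j] kj by auto
        qed
      qed
      moreover have "(\<Sum>k\<in>R. (a k - (a k - 50 * (b k - a k))) / (a k - (b i + l))^2)
          = 50 * (\<Sum>k\<in>R. (b k - a k) / (D k)^2)"
        by (simp add: sum_distrib_left R_def D_def)
      ultimately show ?thesis using l by (simp add: field_simps)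
    qed
    have sumL: "(\<Sum>k\<in>L. (b k - a k) / (D k)^2) \<le> 1 / (50 * 49 * l)"
    proof -
      have "(\<Sum>k\<in>L. (- b k - (- b k - 50 * (b k - a k))) / (- b k - (l - a i))^2) \<le> 1 / (49 * l)"
      proof (rule sumbound[OF KRL(4) l])
        show "\<forall>k\<in>L. l - a i + 49 * l \<le> - b k - 50 * (b k - a k) \<and> - b k - 50 * (b k - a k) \<le> - b k"
        proof
          fix k assume k: "k \<in> L"
          then have k1: "k \<in> {1..m}" "i \<noteq> k" "a k \<le> a i" by (auto simp: R_def K_def L_def)
          have "a k < b k" using intervals k1 by auto
          then show "l - a i + 49 * l \<le> - b k - 50 * (b k - a k) \<and> - b k - 50 * (b k - a k) \<le> - b k"
            using sepk[OF i k1(1,2)] k1 intervals[OF i] by (auto simp: l_def)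
        qed
        show "\<forall>k\<in>L. \<forall>j\<in>L. k \<noteq> j \<longrightarrow> - b k < - b j - 50 * (b j - a j) \<or> - b j < - b k - 50 * (b k - a k)"
        proof (intro ballI impI)
          fix k j assume kj: "k \<in> L" "j \<in> L" "k \<noteq> j"
          then have "k \<in> {1..m}" "j \<in> {1..m}" by (auto simp: L_def R_def K_def)
          moreover have "a k < b k" "a j < b j" using intervals calculation by auto
          ultimately show "- b k < - b j - 50 * (b j - a j) \<or> - b j < - b k - 50 * (b k - a k)"
            using sepk[of k j] kj by auto
        qed
      qed
      moreover have "(\<Sum>k\<in>L. (- b k - (- b k - 50 * (b k - a k))) / (- b k - (l - a i))^2)
          = 50 * (\<Sum>k\<in>L. (b k - a k) / (D k)^2)"
        unfolding sum_distrib_left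
      proof (rule sum.cong[OF refl])
        fix k assume "k \<in> L"
        then have "D k = a i - l - b k" by (auto simp: L_def R_def D_def)
        moreover have "(- b k - (l - a i))^2 = (a i - l - b k)^2" by algebra
        ultimately show "(- b k - (- b k - 50 * (b k - a k))) / (- b k - (l - a i))^2 = 50 * ((b k - a k) / (D k)^2)"
          by simp
      qed
      ultimately show ?thesis using l by (simp add: field_simps)
    qed
    have Fdiff: "\<bar>F i x - F i (a i)\<bar> \<le> lam / 100"
    proof -
      have "F i x - F i (a i) = (\<Sum>k\<in>K. N k x - N k (a i))"
        unfolding F_def K_def by (simp add: sum_subtractf)
      then have "\<bar>F i x - F i (a i)\<bar> \<le> (\<Sum>k\<in>K. \<bar>N k x - N k (a i)\<bar>)"
        by (simp add: sum_abs)
      also have "\<dots> \<le> (\<Sum>k\<in>K. 4 * l * lam * ((b k - a k) / (D k)^2))"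
        by (rule sum_mono) (rule pk)
      also have "\<dots> = 4 * l * lam * ((\<Sum>k\<in>R. (b k - a k) / (D k)^2) + (\<Sum>k\<in>L. (b k - a k) / (D k)^2))"
        unfolding sum_distrib_left[symmetric] KRL(1) using KRL by (simp add: sum.union_disjoint)
      also have "\<dots> \<le> 4 * l * lam * (2 / (50 * 49 * l))"
        apply (rule mult_left_mono) using sumR sumL l lam_pos by auto
      also have "\<dots> \<le> lam / 100" using l lam_pos by (simp add: field_simps)
      finally show ?thesis .
    qed
    have avgi: "lam * l \<le> (LINT y:{a i..b i}|lborel. f y)"
      using avg[OF i] l by (simp add: l_def le_divide_eq)
    have big: "(49 / 100) * lam \<le> \<bar>N i x + F i x\<bar>"
    proof (cases "0 \<le> F i (a i)")
      case True
      then have "J i = 1" by (simp add: J_def)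
      then have xx: "b i < x" "x < 2 * b i - a i" using x by (auto simp: shift_lo_def shift_hi_def)
      have "(LINT y:{a i..b i}|lborel. f y) / (2 * (b i - a i)) \<le> N i x"
        unfolding N_def by (rule near_pos[OF f_nonneg fint intervals[OF i] xx])
      moreover have "lam / 2 \<le> (LINT y:{a i..b i}|lborel. f y) / (2 * (b i - a i))"
        using avgi l by (simp add: l_def field_simps)
      moreover have "F i (a i) - lam / 100 \<le> F i x" using Fdiff abs_le_D1[of "F i x - F i (a i)"] abs_le_D2[of "F i x - F i (a i)"] by linarith
      ultimately have "(49 / 100) * lam \<le> N i x + F i x" using True by linarith
      then show ?thesis by linarith
    next
      case False
      then have "J i = -1" by (simp add: J_def)
      then have xx: "2 * a i - b i < x" "x < a i" using x by (auto simp: shift_lo_def shift_hi_def)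
      have "N i x \<le> - ((LINT y:{a i..b i}|lborel. f y) / (2 * (b i - a i)))"
        unfolding N_def by (rule near_neg[OF f_nonneg fint intervals[OF i] xx])
      moreover have "lam / 2 \<le> (LINT y:{a i..b i}|lborel. f y) / (2 * (b i - a i))"
        using avgi l by (simp add: l_def field_simps)
      moreover have "F i x \<le> F i (a i) + lam / 100" using Fdiff abs_le_D1[of "F i x - F i (a i)"] abs_le_D2[of "F i x - F i (a i)"] by linarith
      ultimately have "N i x + F i x \<le> - ((49 / 100) * lam)" using False by linarith
      then show ?thesis by linarith
    qed
    have pi: "pi \<le> 3.2" using pi_approx(2) by simp
    have "lam / 8 \<le> \<bar>N i x + F i x\<bar> / pi"
    proof -
      have pl: "pi * lam \<le> (16/5) * lam" using pi lam_pos by (intro mult_right_mono) auto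
      have b8: "8 * ((49 / 100) * lam) \<le> 8 * \<bar>N i x + F i x\<bar>" using big by simp
      have "(16/5) * lam \<le> 8 * ((49 / 100) * lam)" using lam_pos by simp
      then have "pi * lam \<le> 8 * \<bar>N i x + F i x\<bar>" using pl b8 by linarith
      then show ?thesis using pi_gt_zero by (simp add: field_simps)
    qed
    then show ?thesis unfolding S by (simp add: abs_mult)
  qed
  show ?thesis
  proof (intro exI[of _ J] conjI ballI)
    fix i assume "i \<in> {1..m}"
    show "J i \<in> {-50..50} - {0}" by (simp add: J_def)
  next
    fix x assume "x \<in> (\<Union>i\<in>{1..m}. {shift_lo (a i) (b i) (J i) <..< shift_hi (a i) (b i) (J i)})"
    then obtain i where "i \<in> {1..m}" "x \<in> {shift_lo (a i) (b i) (J i) <..< shift_hi (a i) (b i) (J i)}" by blast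
    from key[OF this] show "lam / 8 \<le> \<bar>hilbert (\<lambda>y. indicator (\<Union>i\<in>{1..m}. {a i..b i}) y * f y) x\<bar>"
      unfolding E_def .
  qed
qed

end
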